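(* Fix $x_{\rm A}>0$. For $0<x_{\rm B}<x_{\rm A}$ let $T_D^R(v_{\rm A};x_{\rm B})$ be the direct rectilinear elapsed-time function. Then $$\frac{\partial^2T_D^R}{\partial v_{\rm A}^2}(0;x_{\rm B})\longrightarrow+\infty\qquad\text{as }x_{\rm B}\to x_{\rm A}^-.$$
   Context: Kepler problem on a line normalized as $\ddot x=-1/x^2$ ($x>0$). For $v_{\rm A}<\sqrt{2/x_{\rm A}}$, $T_D^R(v_{\rm A};x_{\rm B})$ is the first time after $t_{\rm A}$ (minus $t_{\rm A}$) at which the solution with $x(t_{\rm A})=x_{\rm A}$, $\dot x(t_{\rm A})=v_{\rm A}$ reaches $x_{\rm B}$ (without collision with $0$; after culmination if $v_{\rm A}\ge0$). It is a smooth function of $v_{\rm A}$. *)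

theory Defs
  imports "HOL-Analysis.Analysis"
begin

text \<open>Solution of the normalized rectilinear Kepler equation x'' = -1/x^2 on [0,t]
  (time measured from t_A), staying in x > 0 (no collision), with
  x(0) = xA and x'(0) = vA.\<close>
definition kepler_sol :: "real \<Rightarrow> real \<Rightarrow> real \<Rightarrow> (real \<Rightarrow> real) \<Rightarrow> (real \<Rightarrow> real) \<Rightarrow> bool" where
  "kepler_sol xA vA t x x' \<longleftrightarrow>
     x 0 = xA \<and> x' 0 = vA \<and>
     (\<forall>s\<in>{0..t}. x s > 0 \<and>
        (x has_real_derivative x' s) (at s within {0..t}) \<and>
        (x' has_real_derivative (- 1 / (x s)^2)) (at s within {0..t}))"

definition TDR :: "real \<Rightarrow> real \<Rightarrow> real \<Rightarrow> real" where
  "TDR xA xB vA = (THE t. t > 0 \<and> (\<exists>x x'. kepler_sol xA vA t x x' \<and> x t = xB \<and>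
                       (\<forall>s\<in>{0<..<t}. x s \<noteq> xB)))"

end

theory Submission
  imports Defs
begin
definition SS :: "real \<Rightarrow> real \<Rightarrow> real" where
  "SS a p = - 2 * a * sqrt a * (arctan (sqrt a * p) + sqrt a * p / (1 + a * p^2))"

lemma aux_inv: "q \<noteq> 0 \<Longrightarrow> inverse q * s + s * (2 - q) / q^2 = 2 * s / (q::real)^2"
  by (simp add: field_simps power2_eq_square)

lemma SS_deriv:
  assumes "a > 0"
  shows "(SS a has_real_derivative (- 4 * a^2 / (1 + a * p^2)^2)) (at p)"
proof -
  have pos: "1 + a * p^2 > 0" using assms by (simp add: add_pos_nonneg)
  have sa: "sqrt a * sqrt a = a" using assms by simp
  have e: "1 - a * p^2 = 2 - (1 + a * p^2)" by simp
  have X: "inverse (1 + a * p\<^sup>2) * sqrt a + sqrt a * (2 - (1 + a * p^2)) / (1 + a * p^2)^2 = 2 * sqrt a / (1 + a * p\<^sup>2)\<^sup>2"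
    using pos by (intro aux_inv) simp
  have h: "((\<lambda>x. arctan (sqrt a * x) + sqrt a * x / (1 + a * x^2)) has_real_derivative
      2 * sqrt a / (1 + a * p^2)^2) (at p)"
    apply (rule derivative_eq_intros refl)+
    using pos apply simp
    apply (rule refl)
    proof -
      have F1: "(sqrt a * p)^2 = a*p^2" using assms by (simp add: power_mult_distrib)
      have F2: "(0*p + 1* sqrt a)*(1+a*p^2) - sqrt a * p * (0 + (0*p^2 + real 2*(1*p^(2-Suc 0))*a)) = sqrt a*(2 - (1+a*p^2))"
        by (simp add: algebra_simps power2_eq_square)
      have F3: "(1+a*p^2)*(1+a*p^2) = (1+a*p^2)^2" by (simp add: power2_eq_square)
      show "inverse (1 + (sqrt a * p)\<^sup>2) * (0 * p + 1 * sqrt a) +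
    ((0 * p + 1 * sqrt a) * (1 + a * p\<^sup>2) -
     sqrt a * p * (0 + (0 * p\<^sup>2 + real 2 * (1 * p ^ (2 - Suc 0)) * a))) /
    ((1 + a * p\<^sup>2) * (1 + a * p\<^sup>2)) =
    2 * sqrt a / (1 + a * p\<^sup>2)\<^sup>2"
        unfolding F1 F2 F3 using X by simp
    qed
  have Y1: "- 2 * a * sqrt a * (2 * sqrt a / (1 + a * p^2)^2) = - 4 * a * (sqrt a)^2 / (1 + a * p^2)^2"
    by (simp add: power2_eq_square)
  have Y: "- 2 * a * sqrt a * (2 * sqrt a / (1 + a * p^2)^2) = - 4 * a^2 / (1 + a * p^2)^2"
    unfolding Y1 using assms by (simp add: power2_eq_square)
  show ?thesis unfolding SS_def [abs_def]
    using DERIV_cmult[OF h, of "- 2 * a * sqrt a"] unfolding Y .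
qed

lemma SS_less:
  assumes "a > 0" "p < q"
  shows "SS a q < SS a p"
proof (rule DERIV_neg_imp_decreasing[OF assms(2)])
  fix x
  have "1 + a * x^2 > 0" using assms by (simp add: add_pos_nonneg)
  then have "- 4 * a^2 / (1 + a * x^2)^2 < 0" using assms by (simp add: divide_pos_pos)
  then show "\<exists>y. (SS a has_real_derivative y) (at x) \<and> y < 0"
    using SS_deriv[OF assms(1), of x] by blast
qed

lemma SS_less_iff:
  assumes "a > 0"
  shows "SS a q < SS a p \<longleftrightarrow> p < q"
  using SS_less[OF assms, of p q] SS_less[OF assms, of q p]
  by (cases p q rule: linorder_cases) auto

lemma SS_eq_iff:
  assumes "a > 0"
  shows "SS a q = SS a p \<longleftrightarrow> p = q"
  using SS_less[OF assms, of p q] SS_less[OF assms, of q p]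
  by (cases p q rule: linorder_cases) auto

lemma SS_cont: "a > 0 \<Longrightarrow> isCont (SS a) x"
  using SS_deriv DERIV_isCont by blast

definition SI :: "real \<Rightarrow> real \<Rightarrow> real" where
  "SI a y = inv (SS a) y"

lemma SI_SS: "a > 0 \<Longrightarrow> SI a (SS a z) = z"
  unfolding SI_def by (rule inv_f_f) (auto simp: inj_def SS_eq_iff)

lemma SS_range:
  assumes "a > 0" "p \<le> q" "SS a q \<le> y" "y \<le> SS a p"
  shows "\<exists>z. p \<le> z \<and> z \<le> q \<and> SS a z = y"
  using IVT2[of "SS a" q y p] assms SS_cont[OF assms(1)] by auto

lemma SS_SI:
  assumes "a > 0" "p \<le> q" "SS a q \<le> y" "y \<le> SS a p"
  shows "SS a (SI a y) = y"
  using SS_range[OF assms] SI_SS[OF assms(1)] by auto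

lemma SI_deriv:
  assumes "a > 0"
  shows "(SI a has_real_derivative (- ((1 + a * z^2)^2) / (4 * a^2))) (at (SS a z))"
proof -
  have pos: "1 + a * z^2 > 0" using assms by (simp add: add_pos_nonneg)
  have c: "isCont (SI a) (SS a z)"
    by (rule isCont_inverse_function[of 1]) (auto simp: SI_SS[OF assms] SS_cont[OF assms])
  have "(SI a has_real_derivative inverse (- 4 * a^2 / (1 + a * z^2)^2)) (at (SS a z))"
  proof (rule DERIV_inverse_function[where a = "SS a (z+1)" and b = "SS a (z - 1)"])
    show "(SS a has_real_derivative - 4 * a^2 / (1 + a * z^2)^2) (at (SI a (SS a z)))"
      using SI_SS[OF assms] SS_deriv[OF assms] by simp
    show "- 4 * a^2 / (1 + a * z^2)^2 \<noteq> 0" using assms pos by simp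
    show "SS a (z + 1) < SS a z" "SS a z < SS a (z - 1)" using SS_less[OF assms] by auto
    show "SS a (SI a y) = y" if "SS a (z + 1) < y" "y < SS a (z - 1)" for y
      using SS_SI[OF assms, of "z - 1" "z + 1" y] that by auto
  qed (fact c)
  then show ?thesis using assms pos by (simp add: inverse_eq_divide)
qed

lemma aux_q: "a > 0 \<Longrightarrow> (q::real) > 0 \<Longrightarrow> (- 4 * a^2 / q^2) * (- 1 / (2 * a / q)^2) - 1 = 0"
  by (simp add: field_simps power2_eq_square)

lemma sol_unique:
  assumes a: "a > 0" and aA: "1 / (2 * a) = 1 / xA - v^2 / 2"
    and t: "t > 0" and sol: "kepler_sol xA v t Y Y'"
  shows "\<forall>s\<in>{0..t}. Y s = 2 * a / (1 + a * (Y' s)^2) \<and> SS a (Y' s) = SS a v + s"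
proof -
  have Y0: "Y 0 = xA" and Y'0: "Y' 0 = v"
    and Yp: "\<And>s. s \<in> {0..t} \<Longrightarrow> Y s > 0"
    and dY: "\<And>s. s \<in> {0..t} \<Longrightarrow> (Y has_real_derivative Y' s) (at s within {0..t})"
    and dY': "\<And>s. s \<in> {0..t} \<Longrightarrow> (Y' has_real_derivative - 1 / (Y s)^2) (at s within {0..t})"
    using sol unfolding kepler_sol_def by auto
  have xA: "xA > 0" using Yp[of 0] t Y0 by auto
  have "\<exists>c. \<forall>s\<in>{0..t}. (Y' s)^2 / 2 - 1 / Y s = c"
  proof (rule has_field_derivative_zero_constant)
    fix s assume s: "s \<in> {0..t}"
    have "((\<lambda>s. (Y' s)^2 / 2 - 1 / Y s) has_real_derivative
        (2 * Y' s * (- 1 / (Y s)^2)) / 2 - (- (Y' s) / (Y s)^2)) (at s within {0..t})"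
      using dY[OF s] dY'[OF s] Yp[OF s]
      by (auto intro!: derivative_eq_intros simp: power2_eq_square field_simps)
    moreover have "(2 * Y' s * (- 1 / (Y s)^2)) / 2 - (- (Y' s) / (Y s)^2) = 0"
      by simp
    ultimately show "((\<lambda>s. (Y' s)^2 / 2 - 1 / Y s) has_real_derivative 0) (at s within {0..t})"
      by simp
  qed simp
  then obtain c where c: "\<And>s. s \<in> {0..t} \<Longrightarrow> (Y' s)^2 / 2 - 1 / Y s = c" by blast
  have c0: "c = v^2/2 - 1/xA" using c[of 0] t Y0 Y'0 by auto
  have Yf: "Y s = 2 * a / (1 + a * (Y' s)^2)" if s: "s \<in> {0..t}" for s
  proof -
    have "1 / Y s = (Y' s)^2 / 2 + 1 / (2 * a)" using c[OF s] c0 aA by simp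
    also have "\<dots> = (1 + a * (Y' s)^2) / (2 * a)" using a by (simp add: field_simps)
    finally have "1 / Y s = (1 + a * (Y' s)^2) / (2 * a)" .
    moreover have "1 + a * (Y' s)^2 > 0" using a by (simp add: add_pos_nonneg)
    ultimately show ?thesis using Yp[OF s] a by (simp add: field_simps)
  qed
  have "\<exists>c. \<forall>s\<in>{0..t}. SS a (Y' s) - s = c"
  proof (rule has_field_derivative_zero_constant)
    fix s assume s: "s \<in> {0..t}"
    have pos: "1 + a * (Y' s)^2 > 0" using a by (simp add: add_pos_nonneg)
    have "((\<lambda>s. SS a (Y' s) - s) has_real_derivative
        (- 4 * a^2 / (1 + a * (Y' s)^2)^2) * (- 1 / (Y s)^2) - 1) (at s within {0..t})"
      using DERIV_diff[OF DERIV_chain'[OF dY'[OF s] SS_deriv[OF a]] DERIV_ident]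
      by (simp add: mult.commute)
    moreover have e: "(- 4 * a^2 / (1 + a * (Y' s)^2)^2) * (- 1 / (Y s)^2) - 1 = 0"
      unfolding Yf[OF s] using a pos by (intro aux_q) auto
    ultimately show "((\<lambda>s. SS a (Y' s) - s) has_real_derivative 0) (at s within {0..t})"
      by (simp only: e)
  qed simp
  then obtain d where d: "\<And>s. s \<in> {0..t} \<Longrightarrow> SS a (Y' s) - s = d" by blast
  have d0: "d = SS a v" using d[of 0] t Y'0 by auto
  show ?thesis using Yf d d0 by force
qed

lemma aux_w: "a > 0 \<Longrightarrow> (q::real) > 0 \<Longrightarrow> (- (2 * a * (a * (2 * w * (- 1 / (2 * a / q)^2)))) / q^2) = w"
  by (simp add: field_simps power2_eq_square)

lemma aux_sq_less: "(x::real)^2 < y^2 \<Longrightarrow> y > 0 \<Longrightarrow> - y < x \<and> x < y"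
proof -
  assume a: "x^2 < y^2" "y > 0"
  have "\<bar>x\<bar> < y" using power2_less_imp_less[of "\<bar>x\<bar>" y] a by simp
  then show ?thesis by linarith
qed

lemma TDR_formula:
  fixes xA xB v :: real
  assumes xA: "xA > 0" and xB: "0 < xB" "xB < xA" and v: "xA * v^2 < 2"
  defines "a \<equiv> xA / (2 - xA * v^2)"
  defines "vB \<equiv> sqrt (2 * a / xB - 1) / sqrt a"
  shows "TDR xA xB v = SS a (- vB) - SS a v"
proof -
  have a: "a > 0" using xA v unfolding a_def by simp
  have aA: "1 / (2 * a) = 1 / xA - v^2 / 2" using xA v unfolding a_def by (simp add: field_simps)
  have a2: "2 * a \<ge> xA"
  proof -
    have "xA * v^2 \<ge> 0" using xA by simp
    then have "2 - xA * v^2 \<le> 2" by simp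
    then show ?thesis using xA v unfolding a_def by (simp add: field_simps)
  qed
  have r1: "2 * a / xB - 1 > 0" using a2 xB by (simp add: field_simps)
  have vB0: "vB > 0" unfolding vB_def using r1 a by simp
  have vB2: "a * vB^2 = 2 * a / xB - 1"
    unfolding vB_def using r1 a by (simp add: power_divide)
  have posA: "1 + a * v^2 > 0" using a by (simp add: add_pos_nonneg)
  have xAf: "xA = 2 * a / (1 + a * v^2)" using aA a xA posA by (simp add: field_simps)
  have xBf: "xB = 2 * a / (1 + a * vB^2)" unfolding vB2 using xB a by simp
  have "1 + a * v^2 < 1 + a * vB^2"
  proof -
    have "2 * a / (1 + a * vB^2) < 2 * a / (1 + a * v^2)" using xB xAf xBf by simp
    then show ?thesis using a posA by (simp add: field_simps add_pos_nonneg)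
  qed
  then have "v^2 < vB^2" using a by simp
  then have vlt: "- vB < v" "v < vB" using aux_sq_less vB0 by auto
  define t0 where "t0 = SS a (- vB) - SS a v"
  have t0: "t0 > 0" unfolding t0_def using SS_less[OF a vlt(1)] by simp
  show ?thesis unfolding TDR_def
  proof (rule the_equality)
    fix t assume "0 < t \<and> (\<exists>x x'. kepler_sol xA v t x x' \<and> x t = xB \<and> (\<forall>s\<in>{0<..<t}. x s \<noteq> xB))"
    then obtain Y Y' where t: "t > 0" and sol: "kepler_sol xA v t Y Y'" and Yt: "Y t = xB" by blast
    from sol_unique[OF a aA t sol] t have
      e1: "Y t = 2 * a / (1 + a * (Y' t)^2)" and e2: "SS a (Y' t) = SS a v + t" by auto
    have "1 + a * (Y' t)^2 > 0" using a by (simp add: add_pos_nonneg)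
    then have "1 + a * (Y' t)^2 = 1 + a * vB^2" using e1 Yt xBf a posA xB
      by (auto simp: field_simps add_pos_nonneg)
    then have "(Y' t)^2 = vB^2" using a by simp
    then have "Y' t = vB \<or> Y' t = - vB" by (simp add: power2_eq_iff)
    moreover have "Y' t < v" using e2 t SS_less_iff[OF a, of v "Y' t"] by simp
    ultimately have "Y' t = - vB" using vlt by auto
    then show "t = SS a (- vB) - SS a v" using e2 by simp
  next
    show "0 < SS a (- vB) - SS a v \<and>
      (\<exists>x x'. kepler_sol xA v (SS a (- vB) - SS a v) x x' \<and> x (SS a (- vB) - SS a v) = xB \<and>
        (\<forall>s\<in>{0<..<SS a (- vB) - SS a v}. x s \<noteq> xB))"
    proof -
      define X' where "X' s = SI a (SS a v + s)" for s
      define X where "X s = 2 * a / (1 + a * (X' s)^2)" for s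
      have rng: "- vB \<le> X' s \<and> X' s \<le> v \<and> SS a (X' s) = SS a v + s" if s: "s \<in> {0..t0}" for s
      proof -
        obtain z where z: "- vB \<le> z" "z \<le> v" "SS a z = SS a v + s"
          using SS_range[OF a less_imp_le[OF vlt(1)], of "SS a v + s"] s unfolding t0_def by auto
        then have "X' s = z" unfolding X'_def using SI_SS[OF a, of z] by simp
        then show ?thesis using z by simp
      qed
      have qpos: "1 + a * (X' s)^2 > 0" for s using a by (simp add: add_pos_nonneg)
      have dX': "(X' has_real_derivative - 1 / (X s)^2) (at s)" if s: "s \<in> {0..t0}" for s
      proof -
        have "(SI a has_real_derivative (- ((1 + a * (X' s)^2)^2) / (4 * a^2))) (at (SS a v + s))"
          using SI_deriv[OF a, of "X' s"] rng[OF s] by simp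
        from DERIV_chain'[OF DERIV_add[OF DERIV_const[of "SS a v"] DERIV_ident] this]
        have "(X' has_real_derivative (- ((1 + a * (X' s)^2)^2) / (4 * a^2)) * (0 + 1)) (at s)"
          unfolding X'_def[abs_def] by simp
        moreover have "(- ((1 + a * (X' s)^2)^2) / (4 * a^2)) * (0 + 1) = - 1 / (X s)^2"
          unfolding X_def using a qpos[of s] by (simp add: field_simps power2_eq_square)
        ultimately show ?thesis by simp
      qed
      have dX: "(X has_real_derivative X' s) (at s)" if s: "s \<in> {0..t0}" for s
      proof -
        have "(X has_real_derivative (- (2 * a * (a * (2 * X' s * (- 1 / (X s)^2)))) / (1 + a * (X' s)^2)^2)) (at s)"
          unfolding X_def[abs_def] using qpos[of s]
          by (auto intro!: derivative_eq_intros dX'[OF s, unfolded X_def] simp: power2_eq_square)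
        moreover have "(- (2 * a * (a * (2 * X' s * (- 1 / (X s)^2)))) / (1 + a * (X' s)^2)^2) = X' s"
          unfolding X_def using a qpos[of s] by (intro aux_w) auto
        ultimately show ?thesis by simp
      qed
      have "kepler_sol xA v t0 X X'"
        unfolding kepler_sol_def
      proof (intro conjI ballI)
        show "X' 0 = v" unfolding X'_def using SI_SS[OF a] by simp
        then show "X 0 = xA" unfolding X_def using xAf by simp
        fix s assume s: "s \<in> {0..t0}"
        show "X s > 0" unfolding X_def using a qpos[of s] by simp
        show "(X has_real_derivative X' s) (at s within {0..t0})"
          using dX[OF s] by (rule has_field_derivative_at_within)
        show "(X' has_real_derivative - 1 / (X s)^2) (at s within {0..t0})"
          using dX'[OF s] by (rule has_field_derivative_at_within)
      qed
      moreover have "X t0 = xB"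
      proof -
        have "X' t0 = - vB" using rng[of t0] t0 SS_eq_iff[OF a] unfolding t0_def by auto
        then show ?thesis unfolding X_def using xBf by simp
      qed
      moreover have "X s \<noteq> xB" if s: "s \<in> {0<..<t0}" for s
      proof
        assume "X s = xB"
        then have "1 + a * (X' s)^2 = 1 + a * vB^2" unfolding X_def using xBf a qpos[of s] posA xB
          by (auto simp: field_simps add_pos_nonneg)
        then have "(X' s)^2 = vB^2" using a by simp
        then have "X' s = vB \<or> X' s = - vB" by (simp add: power2_eq_iff)
        moreover have "SS a (X' s) = SS a v + s" using rng[of s] s by auto
        then have "SS a v < SS a (X' s)" "SS a (X' s) < SS a (- vB)" using s unfolding t0_def by auto
        then have "X' s < v" "- vB < X' s" using SS_less_iff[OF a] by auto
        ultimately show False using vlt by auto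
      qed
      ultimately show ?thesis using t0 unfolding t0_def by blast
    qed
  qed
qed


definition rr :: "real \<Rightarrow> real \<Rightarrow> real" where "rr xB a = sqrt (2 * a / xB - 1)"
definition FF :: "real \<Rightarrow> real \<Rightarrow> real" where
  "FF xB a = 2 * a * sqrt a * arctan (rr xB a) + xB * sqrt a * rr xB a"
definition FF1 :: "real \<Rightarrow> real \<Rightarrow> real" where
  "FF1 xB a = 3 * sqrt a * arctan (rr xB a) + 2 * sqrt a / rr xB a + xB * rr xB a / (2 * sqrt a)"

lemma FF_eq:
  assumes a: "a > 0" and xB: "xB > 0" and r: "2 * a / xB - 1 > 0"
  shows "SS a (- (sqrt (2 * a / xB - 1) / sqrt a)) = FF xB a"
proof -
  define r where "r = sqrt (2 * a / xB - 1)"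
  have r2: "r^2 = 2 * a / xB - 1" unfolding r_def using r by simp
  have e1: "sqrt a * (- (r / sqrt a)) = - r" using a by simp
  have e2: "a * (- (r / sqrt a))^2 = r^2" using a by (simp add: power_divide)
  have e3: "1 + r^2 = 2 * a / xB" using r2 by simp
  show ?thesis unfolding SS_def FF_def rr_def r_def[symmetric] e1 e2 e3
    using a xB by (simp add: field_simps arctan_minus)
qed

lemma aux_FF1:
  assumes "(s::real) > 0" "r > 0" "xB > 0" "a = s^2" "r^2 = 2 * a / xB - 1"
  shows "((0 * a + 1 * 2) * s + inverse s / 2 * (2 * a)) * A +
     inverse (1 + r^2) * (1 / (xB * r)) * (2 * a * s) +
     ((0 * s + inverse s / 2 * xB) * r + 1 / (xB * r) * (xB * s)) =
     3 * s * A + 2 * s / r + xB * r / (2 * s)"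
proof -
  have e: "1 + r^2 = 2 * s^2 / xB" using assms by simp
  show ?thesis unfolding e assms(4) using assms(1-3) by (simp add: field_simps power2_eq_square)
qed

lemma FF_deriv:
  assumes a: "a > 0" and xB: "xB > 0" and r: "2 * a / xB - 1 > 0"
  shows "(FF xB has_real_derivative FF1 xB a) (at a)"
proof -
  define r where "r = sqrt (2 * a / xB - 1)"
  have rp: "r > 0" unfolding r_def using r by simp
  have r2: "r^2 = 2 * a / xB - 1" unfolding r_def using r by simp
  have dr: "(rr xB has_real_derivative 1 / (xB * r)) (at a)"
  proof -
    have l: "((\<lambda>a. 2 * a / xB - 1) has_real_derivative 2 / xB) (at a)"
      using xB by (auto intro!: derivative_eq_intros)
    have "inverse (sqrt (2 * a / xB - 1)) / 2 * (2 / xB) = 1 / (xB * r)"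
      unfolding r_def using xB by (simp add: field_simps)
    then show ?thesis using DERIV_chain'[OF l DERIV_real_sqrt[OF r]] unfolding rr_def[abs_def] by simp
  qed
  have ds: "(sqrt has_real_derivative inverse (sqrt a) / 2) (at a)" using DERIV_real_sqrt[OF a] .
  show ?thesis unfolding FF_def[abs_def]
    apply (rule ds dr derivative_eq_intros refl | assumption)+
    unfolding FF1_def rr_def r_def[symmetric]
    apply (rule aux_FF1)
    using a xB rp r2 by auto
qed

definition aa :: "real \<Rightarrow> real \<Rightarrow> real" where "aa xA v = xA / (2 - xA * v^2)"
definition aa1 :: "real \<Rightarrow> real \<Rightarrow> real" where "aa1 xA v = 2 * xA^2 * v / (2 - xA * v^2)^2"
definition GG :: "real \<Rightarrow> real \<Rightarrow> real" where "GG xA v = - SS (aa xA v) v"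

lemma aa_deriv:
  assumes "xA * v^2 \<noteq> 2"
  shows "((\<lambda>v. aa xA v) has_real_derivative aa1 xA v) (at v)"
proof -
  have n: "2 - xA * v^2 \<noteq> 0" using assms by simp
  show ?thesis unfolding aa_def aa1_def
    apply (rule derivative_eq_intros refl | simp add: n assms)+
    apply (simp only: power2_eq_square[of "2 - xA * v^2", symmetric])
    using n by (simp add: power2_eq_square)
qed

lemma aa1_deriv0: "((\<lambda>v. aa1 xA v) has_real_derivative xA^2 / 2) (at 0)"
  unfolding aa1_def
  apply (rule derivative_eq_intros refl | simp)+
  done

lemma my_sqrt: "0 < f x \<Longrightarrow> (f has_real_derivative D) (at x) \<Longrightarrow>
   ((\<lambda>x. sqrt (f x)) has_real_derivative (inverse (sqrt (f x)) / 2 * D)) (at x)"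
  by (rule DERIV_chain'[OF _ DERIV_real_sqrt])

lemma aa_pos: "xA > 0 \<Longrightarrow> v \<in> ball 0 (1 / (xA + 1)) \<Longrightarrow> xA * v^2 < 1 \<and> aa xA v > 0"
proof -
  assume xA: "xA > 0" and v: "v \<in> ball 0 (1 / (xA + 1))"
  have "\<bar>v\<bar> < 1 / (xA + 1)" using v by (simp add: dist_norm)
  then have "\<bar>v\<bar> * (xA + 1) < 1" using xA by (simp add: pos_less_divide_eq)
  moreover have n1: "\<bar>v\<bar> * xA \<ge> 0" using xA by simp
  ultimately have "\<bar>v\<bar> * xA + \<bar>v\<bar> < 1" by (simp add: distrib_left)
  then have l1: "\<bar>v\<bar> * xA < 1" and l2: "\<bar>v\<bar> < 1" using n1 by linarith+
  have "\<bar>v\<bar> * xA * \<bar>v\<bar> \<le> \<bar>v\<bar> * xA"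
    using l2 n1 by (intro mult_left_le) auto
  then have lt: "\<bar>v\<bar> * xA * \<bar>v\<bar> < 1" using l1 by (rule le_less_trans)
  have eq: "xA * v^2 = \<bar>v\<bar> * xA * \<bar>v\<bar>"
    by (simp add: power2_eq_square algebra_simps)
  have h: "xA * v^2 < 1" unfolding eq by (rule lt)
  then have "2 - xA * v^2 > 0" by linarith
  then have "aa xA v > 0" unfolding aa_def using xA by (rule divide_pos_pos[rotated])
  then show ?thesis using h by simp
qed

lemma aux_pos1: "0 < a \<Longrightarrow> 1 + a * (v::real)^2 \<noteq> 0"
proof -
  assume "0 < a"
  then have "a * v^2 \<ge> 0" by simp
  then show ?thesis by linarith
qed

lemma aa0: "aa xA 0 = xA / 2" unfolding aa_def by simp

lemma GG_C2:
  assumes xA: "xA > 0"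
  shows "\<exists>G1 DG. (\<forall>v\<in>ball 0 (1 / (xA + 1)). (GG xA has_real_derivative G1 v) (at v)) \<and>
      (G1 has_real_derivative DG) (at 0)"
  apply (rule exI)+
  apply (rule conjI)
   apply (rule ballI)
   apply (drule aa_pos[OF xA])
   apply (unfold GG_def SS_def)
   apply (rule my_sqrt aa_deriv derivative_intros | simp add: aux_pos1)+
  apply (rule my_sqrt aa_deriv aa1_deriv0 derivative_intros | simp add: aux_pos1 aa0 xA less_imp_neq[OF xA, symmetric])+
  done

lemma deriv2_eq:
  assumes d: "d > 0" and f1: "\<And>v. v \<in> ball 0 d \<Longrightarrow> (f has_real_derivative f1 v) (at v)"
    and D: "(f1 has_real_derivative D) (at 0)"
  shows "deriv (deriv f) 0 = D"
proof -
  have "(deriv f has_real_derivative D) (at 0)"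
  proof (rule has_field_derivative_transform_within_open[OF D, of "ball 0 d"])
    fix x :: real assume "x \<in> ball 0 d"
    then show "f1 x = deriv f x" using DERIV_imp_deriv[OF f1] by simp
  qed (use d in auto)
  then show ?thesis by (rule DERIV_imp_deriv)
qed

lemma FF1_diff:
  assumes xA: "xA > 0" and xB: "0 < xB" "xB < xA"
  shows "\<exists>D. (FF1 xB has_real_derivative D) (at (xA / 2))"
proof -
  have e: "2 * (xA / 2) / xB - 1 = xA / xB - 1" by simp
  have r: "xA / xB - 1 > 0" using xB by (simp add: field_simps)
  have r': "sqrt (xA / xB - 1) \<noteq> 0" using r xB by simp
  have hs: "0 < xA/2" "0 < 2 * (xA/2)/xB - 1" "sqrt (2*(xA/2)/xB - 1) \<noteq> 0" "sqrt (xA/2) \<noteq> 0"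
    "2 * sqrt (xA/2) \<noteq> 0" "xB \<noteq> 0"
    using xA r r' xB unfolding e by auto
  have ds: "(sqrt has_real_derivative inverse (sqrt (xA/2)) / 2) (at (xA/2))" using DERIV_real_sqrt xA by simp
  show ?thesis
    unfolding FF1_def[abs_def] rr_def
    apply (rule exI)
    apply (rule my_sqrt ds derivative_intros | rule hs)+
    done
qed

lemma rr_pos:
  assumes "0 < xB" "xB < xA"
  shows "rr xB (xA / 2) > 0"
proof -
  have "1 < xA / xB" using assms by (simp add: less_divide_eq)
  then show ?thesis unfolding rr_def by simp
qed

lemma TDR_split:
  assumes xA: "xA > 0" and xB: "0 < xB" "xB < xA" and v: "v \<in> ball 0 (1 / (xA + 1))"
  shows "TDR xA xB v = FF xB (aa xA v) + GG xA v"
proof -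
  have h: "xA * v^2 < 1" "aa xA v > 0" using aa_pos[OF xA v] by auto
  have a2: "2 * aa xA v \<ge> xA"
  proof -
    have "xA * v^2 \<ge> 0" using xA by simp
    then have "2 - xA * v^2 \<le> 2" by simp
    then show ?thesis using xA h unfolding aa_def by (simp add: field_simps)
  qed
  have r: "2 * aa xA v / xB - 1 > 0" using a2 xB by (simp add: field_simps)
  have "TDR xA xB v = SS (aa xA v) (- (sqrt (2 * aa xA v / xB - 1) / sqrt (aa xA v))) - SS (aa xA v) v"
    using TDR_formula[OF xA xB, of v] h unfolding aa_def by simp
  also have "\<dots> = FF xB (aa xA v) + GG xA v"
    unfolding GG_def using FF_eq[OF h(2) xB(1) r] by simp
  finally show ?thesis .
qed

lemma key:
  assumes xA: "xA > 0" and xB: "0 < xB" "xB < xA"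
    and G1: "\<forall>v\<in>ball 0 (1 / (xA + 1)). (GG xA has_real_derivative G1 v) (at v)"
    and DG: "(G1 has_real_derivative DG) (at 0)"
  shows "deriv (deriv (\<lambda>vA. TDR xA xB vA)) 0 = xA^2 / 2 * FF1 xB (xA / 2) + DG"
proof (rule deriv2_eq)
  show "0 < 1 / (xA + 1)" using xA by simp
  fix v :: real assume v: "v \<in> ball 0 (1 / (xA + 1))"
  have h: "xA * v^2 < 1" "aa xA v > 0" using aa_pos[OF xA v] by auto
  have a2: "2 * aa xA v \<ge> xA"
  proof -
    have "xA * v^2 \<ge> 0" using xA by simp
    then have "2 - xA * v^2 \<le> 2" by simp
    then show ?thesis using xA h unfolding aa_def by (simp add: field_simps)
  qed
  have r: "2 * aa xA v / xB - 1 > 0" using a2 xB by (simp add: field_simps)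
  have "((\<lambda>v. FF xB (aa xA v) + GG xA v) has_real_derivative
      FF1 xB (aa xA v) * aa1 xA v + G1 v) (at v)"
    using h by (intro DERIV_add DERIV_chain2[where f="FF xB" and g="aa xA" and x=v, OF FF_deriv[OF h(2) xB(1) r]] aa_deriv G1[rule_format, OF v]) auto
  then show "((\<lambda>vA. TDR xA xB vA) has_real_derivative FF1 xB (aa xA v) * aa1 xA v + G1 v) (at v)"
    by (rule has_field_derivative_transform_within_open[of _ _ _ "ball 0 (1 / (xA + 1))"])
       (use v TDR_split[OF xA xB] in auto)
next
  obtain DF where DF: "(FF1 xB has_real_derivative DF) (at (xA / 2))" using FF1_diff[OF xA xB] by blast
  have "((\<lambda>v. FF1 xB (aa xA v)) has_real_derivative DF * aa1 xA 0) (at 0)"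
    using DERIV_chain2[OF _ aa_deriv[of xA 0]] DF by (simp add: aa0)
  from DERIV_add[OF DERIV_mult[OF this aa1_deriv0] DG]
  show "((\<lambda>v. FF1 xB (aa xA v) * aa1 xA v + G1 v) has_real_derivative xA^2 / 2 * FF1 xB (xA / 2) + DG) (at 0)"
    by (simp add: aa0 aa1_def)
qed

lemma lin3: "0 \<le> (a::real) \<Longrightarrow> 0 \<le> c \<Longrightarrow> b \<le> a + b + c" by linarith

lemma fin_ineq:
  fixes r xA xB s F c DG :: real
  assumes r: "r > 0" and xA: "xA > 0" and xB: "xB > 0" and s: "s = sqrt (xA / 2)"
    and F: "F = 3 * s * arctan r + 2 * s / r + xB * r / (2 * s)"
    and c: "c = xA^2 / 2 * (2 * s)"
  shows "c * inverse r + DG \<le> xA^2 / 2 * F + DG"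
proof -
  have sp: "s > 0" using s xA by simp
  have n1: "0 \<le> 3 * s * arctan r" using r sp by (intro mult_nonneg_nonneg) auto
  have n2: "0 \<le> xB * r / (2 * s)" using r sp xB by (intro divide_nonneg_pos mult_nonneg_nonneg) auto
  have "2 * s / r \<le> F" unfolding F using n1 n2 by (rule lin3)
  then have le: "xA^2 / 2 * (2 * s / r) \<le> xA^2 / 2 * F"
    by (rule mult_left_mono) (simp add: zero_le_power2 del: divide_le_0_iff)
  have "c * inverse r = xA^2 / 2 * (2 * s / r)" unfolding c divide_inverse by (simp only: mult.assoc)
  then show ?thesis using le by (intro add_right_mono) simp
qed

theorem mainTheorem12:
  fixes xA :: real
  assumes "xA > 0"
  shows "filterlim (\<lambda>xB. deriv (deriv (\<lambda>vA. TDR xA xB vA)) 0) at_top (at_left xA)"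
proof -
  have xA: "xA > 0" using assms .
  obtain G1 DG where G1: "\<forall>v\<in>ball 0 (1 / (xA + 1)). (GG xA has_real_derivative G1 v) (at v)"
    and DG: "(G1 has_real_derivative DG) (at 0)" using GG_C2[OF xA] by blast
  define c where "c = xA^2 / 2 * (2 * sqrt (xA / 2))"
  have c: "c > 0" unfolding c_def using xA by simp
  define L where "L xB = c * inverse (rr xB (xA / 2)) + DG" for xB
  have ev: "eventually (\<lambda>xB. xB \<in> {0<..<xA}) (at_left xA)"
    using eventually_at_left_real[OF xA] .
  have r0: "((\<lambda>xB. rr xB (xA / 2)) \<longlongrightarrow> 0) (at_left xA)"
  proof -
    have "((\<lambda>xB. sqrt (2 * (xA / 2) / xB - 1)) \<longlongrightarrow> sqrt (2 * (xA / 2) / xA - 1)) (at_left xA)"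
      using xA by (intro tendsto_intros) auto
    then show ?thesis unfolding rr_def using xA by simp
  qed
  have rpos: "eventually (\<lambda>xB. rr xB (xA / 2) > 0) (at_left xA)"
    using ev by eventually_elim (rule rr_pos, auto)
  have "filterlim (\<lambda>xB. rr xB (xA / 2)) (at_right 0) (at_left xA)"
    by (rule tendsto_imp_filterlim_at_right[OF r0 rpos])
  then have "filterlim (\<lambda>xB. inverse (rr xB (xA / 2))) at_top (at_left xA)"
    by (rule filterlim_compose[OF filterlim_inverse_at_top_right])
  then have "filterlim (\<lambda>xB. c * inverse (rr xB (xA / 2))) at_top (at_left xA)"
    by (rule filterlim_tendsto_pos_mult_at_top[OF tendsto_const c])
  then have Lt: "filterlim L at_top (at_left xA)"
    unfolding L_def by (subst add.commute) (rule filterlim_tendsto_add_at_top[OF tendsto_const])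
  show ?thesis
  proof (rule filterlim_at_top_mono[OF Lt])
    show "eventually (\<lambda>xB. L xB \<le> deriv (deriv (\<lambda>vA. TDR xA xB vA)) 0) (at_left xA)"
      using ev
    proof eventually_elim
      case (elim xB)
      then have xB: "0 < xB" "xB < xA" by auto
      have k: "deriv (deriv (\<lambda>vA. TDR xA xB vA)) 0 = xA^2 / 2 * FF1 xB (xA / 2) + DG"
        by (rule key[OF xA xB G1 DG])
      have r: "rr xB (xA / 2) > 0" using rr_pos[OF xB] .
      have "L xB \<le> xA^2 / 2 * FF1 xB (xA / 2) + DG"
        unfolding L_def by (rule fin_ineq[OF r xA xB(1) refl FF1_def c_def])
      then show ?case unfolding k .
    qed
  qed
qed

end
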